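(* Let $n = |\mathcal S||\mathcal A|$ and let $w=(w_1,\dots,w_n)$ be weights with $w_i>0$ for all $i$ and $\sum_{i=1}^n w_i = 1$. For any $p\in(1,\infty)$ and any $Q,Q'\in\mathbb{R}^{n}$, \[ \|F_\lambda Q - F_\lambda Q'\|_{p,w} \le \gamma_{p,w}\,\|Q-Q'\|_{p,w},\qquad \text{where } \gamma_{p,w} := \gamma\, n^{1/p}\left(\frac{w_{\max}}{w_{\min}}\right)^{1/p}. \]
   Context: Consider a finite discounted MDP with state space $\mathcal S=\{1,\dots,|\mathcal S|\}$, action space $\mathcal A=\{1,\dots,|\mathcal A|\}$, transition probabilities $P(s'\mid s,a)$, expected one-step reward $R(s,a)$, and discount factor $\gamma\in[0,1)$. Q-functions are identified with vectors in $\mathbb{R}^n$, $n=|\mathcal S||\mathcal A|$, indexed by pairs $(s,a)$. For a temperature $\lambda>0$, the soft Bellman operator is \[(F_\lambda Q)(s,a) := R(s,a)+\gamma\sum_{s'\in\mathcal S}P(s'\mid s,a)\,\lambda\ln\Big(\sum_{u\in\mathcal A}\exp\big(Q(s',u)/\lambda\big)\Big).\] For $x\in\mathbb{R}^n$, the weighted norm is $\|x\|_{p,w}=\big(\sum_{i=1}^n w_i|x_i|^p\big)^{1/p}$, and $w_{\min}=\min_i w_i$, $w_{\max}=\max_i w_i$. *)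

theory Defs
  imports "HOL-Analysis.Analysis"
begin

definition soft_bellman ::
  "real \<Rightarrow> real \<Rightarrow> ('s::finite \<Rightarrow> 'a::finite \<Rightarrow> 's \<Rightarrow> real) \<Rightarrow> ('s \<Rightarrow> 'a \<Rightarrow> real)
   \<Rightarrow> ('s \<times> 'a \<Rightarrow> real) \<Rightarrow> ('s \<times> 'a \<Rightarrow> real)" where
  "soft_bellman lam \<gamma> P R Q = (\<lambda>(s, a). R s a + \<gamma> * (\<Sum>s'\<in>UNIV. P s a s' *
      (lam * ln (\<Sum>u\<in>UNIV. exp (Q (s', u) / lam)))))"

definition wnorm :: "real \<Rightarrow> ('i::finite \<Rightarrow> real) \<Rightarrow> ('i \<Rightarrow> real) \<Rightarrow> real" where
  "wnorm p w x = (\<Sum>i\<in>UNIV. w i * \<bar>x i\<bar> powr p) powr (1 / p)"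

definition wmin :: "('i::finite \<Rightarrow> real) \<Rightarrow> real" where
  "wmin w = Min (range w)"

definition wmax :: "('i::finite \<Rightarrow> real) \<Rightarrow> real" where
  "wmax w = Max (range w)"

end

theory Submission
  imports Defs
begin

lemma lse_mono:
  fixes a b :: "'a::finite \<Rightarrow> real"
  assumes lam: "lam > 0" and h: "\<And>u. a u \<le> b u + M"
  shows "lam * ln (\<Sum>u\<in>UNIV. exp (a u / lam)) \<le> lam * ln (\<Sum>u\<in>UNIV. exp (b u / lam)) + M"
proof -
  have pos: "0 < (\<Sum>u\<in>UNIV. exp (b u / lam))"
    by (rule sum_pos) auto
  have "(\<Sum>u\<in>UNIV. exp (a u / lam)) \<le> (\<Sum>u\<in>UNIV. exp (M / lam) * exp (b u / lam))"
  proof (rule sum_mono)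
    fix u
    have "a u / lam \<le> M / lam + b u / lam"
      using h[of u] lam by (simp add: divide_right_mono add_divide_distrib[symmetric])
    then show "exp (a u / lam) \<le> exp (M / lam) * exp (b u / lam)"
      by (simp add: exp_add[symmetric])
  qed
  also have "\<dots> = exp (M / lam) * (\<Sum>u\<in>UNIV. exp (b u / lam))"
    by (simp add: sum_distrib_left)
  finally have le: "(\<Sum>u\<in>UNIV. exp (a u / lam)) \<le> exp (M / lam) * (\<Sum>u\<in>UNIV. exp (b u / lam))" .
  have posa: "0 < (\<Sum>u\<in>UNIV. exp (a u / lam))"
    by (rule sum_pos) auto
  have "ln (\<Sum>u\<in>UNIV. exp (a u / lam)) \<le> ln (exp (M / lam) * (\<Sum>u\<in>UNIV. exp (b u / lam)))"
    using le posa pos by simp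
  also have "\<dots> = M / lam + ln (\<Sum>u\<in>UNIV. exp (b u / lam))"
    using pos by (simp add: ln_mult)
  finally have "ln (\<Sum>u\<in>UNIV. exp (a u / lam)) \<le> M / lam + ln (\<Sum>u\<in>UNIV. exp (b u / lam))" .
  then have "lam * ln (\<Sum>u\<in>UNIV. exp (a u / lam)) \<le> lam * (M / lam + ln (\<Sum>u\<in>UNIV. exp (b u / lam)))"
    using lam by (simp add: mult_left_mono)
  then show ?thesis using lam by (simp add: algebra_simps)
qed

theorem proposition1:
  fixes P :: "'s::finite \<Rightarrow> 'a::finite \<Rightarrow> 's \<Rightarrow> real"
    and R :: "'s \<Rightarrow> 'a \<Rightarrow> real"
    and \<gamma> lam p :: real
    and w Q Q' :: "'s \<times> 'a \<Rightarrow> real"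
  assumes P_nonneg: "\<And>s a s'. P s a s' \<ge> 0"
    and P_sum: "\<And>s a. (\<Sum>s'\<in>UNIV. P s a s') = 1"
    and gamma: "0 \<le> \<gamma>" "\<gamma> < 1"
    and lam: "lam > 0"
    and w_pos: "\<And>i. w i > 0"
    and w_sum: "(\<Sum>i\<in>UNIV. w i) = 1"
    and p: "1 < p"
  shows "wnorm p w (\<lambda>i. soft_bellman lam \<gamma> P R Q i - soft_bellman lam \<gamma> P R Q' i)
         \<le> \<gamma> * real CARD('s \<times> 'a) powr (1 / p) * (wmax w / wmin w) powr (1 / p)
           * wnorm p w (\<lambda>i. Q i - Q' i)"
proof -
  define M where "M = Max (range (\<lambda>i. \<bar>Q i - Q' i\<bar>))"
  have Mge: "\<bar>Q i - Q' i\<bar> \<le> M" for i unfolding M_def by (rule Max_ge) auto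
  have M0: "0 \<le> M" using Mge[of undefined] by linarith
  obtain j where Mj: "M = \<bar>Q j - Q' j\<bar>"
  proof -
    have "M \<in> range (\<lambda>i. \<bar>Q i - Q' i\<bar>)" unfolding M_def by (rule Max_in) auto
    then show ?thesis using that by blast
  qed
  define L where "L = (\<lambda>(Q::'s \<times> 'a \<Rightarrow> real) s'. lam * ln (\<Sum>u\<in>UNIV. exp (Q (s', u) / lam)))"
  have Ldiff: "\<bar>L Q s' - L Q' s'\<bar> \<le> M" for s'
  proof -
    have a1: "Q (s', u) \<le> Q' (s', u) + M" "Q' (s', u) \<le> Q (s', u) + M" for u
      using Mge[of "(s', u)"] by (simp_all add: abs_le_iff)
    have "L Q s' \<le> L Q' s' + M" unfolding L_def
      using lse_mono[OF lam, of "\<lambda>u. Q (s', u)" "\<lambda>u. Q' (s', u)" M] a1(1) by simp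
    moreover have "L Q' s' \<le> L Q s' + M" unfolding L_def
      using lse_mono[OF lam, of "\<lambda>u. Q' (s', u)" "\<lambda>u. Q (s', u)" M] a1(2) by simp
    ultimately show ?thesis by linarith
  qed
  have D: "\<bar>soft_bellman lam \<gamma> P R Q i - soft_bellman lam \<gamma> P R Q' i\<bar> \<le> \<gamma> * M" for i
  proof (cases i)
    case (Pair s a)
    have eq: "soft_bellman lam \<gamma> P R Q i - soft_bellman lam \<gamma> P R Q' i
        = \<gamma> * (\<Sum>s'\<in>UNIV. P s a s' * (L Q s' - L Q' s'))"
      unfolding soft_bellman_def Pair L_def
      by (simp add: algebra_simps sum_subtractf)
    have "\<bar>\<Sum>s'\<in>UNIV. P s a s' * (L Q s' - L Q' s')\<bar> \<le> (\<Sum>s'\<in>UNIV. \<bar>P s a s' * (L Q s' - L Q' s')\<bar>)"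
      by (rule sum_abs)
    also have "\<dots> \<le> (\<Sum>s'\<in>UNIV. P s a s' * M)"
      by (rule sum_mono) (simp add: abs_mult P_nonneg Ldiff mult_left_mono)
    also have "\<dots> = M" using P_sum by (simp add: sum_distrib_right[symmetric])
    finally show ?thesis using eq gamma by (simp add: abs_mult mult_left_mono)
  qed
  define S where "S = (\<Sum>i\<in>UNIV. w i * \<bar>Q i - Q' i\<bar> powr p)"
  have "wnorm p w (\<lambda>i. soft_bellman lam \<gamma> P R Q i - soft_bellman lam \<gamma> P R Q' i)
      \<le> (\<Sum>i\<in>UNIV. w i * (\<gamma> * M) powr p) powr (1/p)"
    unfolding wnorm_def
  proof (rule powr_mono2)
    show "0 \<le> 1/p" using p by simp
    show "0 \<le> (\<Sum>i\<in>UNIV. w i * \<bar>soft_bellman lam \<gamma> P R Q i - soft_bellman lam \<gamma> P R Q' i\<bar> powr p)"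
      using w_pos by (simp add: sum_nonneg less_imp_le)
    show "(\<Sum>i\<in>UNIV. w i * \<bar>soft_bellman lam \<gamma> P R Q i - soft_bellman lam \<gamma> P R Q' i\<bar> powr p)
        \<le> (\<Sum>i\<in>UNIV. w i * (\<gamma> * M) powr p)"
    proof (rule sum_mono)
      fix i
      have "\<bar>soft_bellman lam \<gamma> P R Q i - soft_bellman lam \<gamma> P R Q' i\<bar> powr p \<le> (\<gamma> * M) powr p"
        by (rule powr_mono2) (use D p in auto)
      then show "w i * \<bar>soft_bellman lam \<gamma> P R Q i - soft_bellman lam \<gamma> P R Q' i\<bar> powr p \<le> w i * (\<gamma> * M) powr p"
        using w_pos[of i] by (simp add: mult_left_mono)
    qed
  qed
  also have "\<dots> = \<gamma> * M"
    using w_sum gamma M0 p by (simp add: sum_distrib_right[symmetric] powr_powr)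
  finally have step1: "wnorm p w (\<lambda>i. soft_bellman lam \<gamma> P R Q i - soft_bellman lam \<gamma> P R Q' i) \<le> \<gamma> * M" .
  have wmin_le: "wmin w \<le> w i" for i unfolding wmin_def by (rule Min_le) auto
  have wmin_pos: "0 < wmin w" unfolding wmin_def using Min_in[of "range w"] w_pos by auto
  have wmax_ge: "w i \<le> wmax w" for i unfolding wmax_def by (rule Max_ge) auto
  have S0: "0 \<le> S" unfolding S_def using w_pos by (simp add: sum_nonneg less_imp_le)
  have "wmin w * M powr p \<le> w j * M powr p"
    using wmin_le[of j] by (simp add: mult_right_mono)
  also have "\<dots> \<le> S" unfolding S_def Mj
    by (rule member_le_sum) (use w_pos in \<open>simp_all add: less_imp_le\<close>)
  finally have "M powr p \<le> S / wmin w" using wmin_pos by (simp add: field_simps)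
  then have "(M powr p) powr (1/p) \<le> (S / wmin w) powr (1/p)"
    using p M0 by (intro powr_mono2) auto
  then have Mle: "M \<le> (S / wmin w) powr (1/p)" using p M0 by (simp add: powr_powr)
  have "1 = (\<Sum>i\<in>UNIV. w i)" using w_sum by simp
  also have "\<dots> \<le> (\<Sum>i\<in>(UNIV::('s \<times> 'a) set). wmax w)" using sum_mono[of UNIV w "\<lambda>_. wmax w"] wmax_ge by blast
  also have "\<dots> = real CARD('s \<times> 'a) * wmax w" by simp
  finally have nw: "1 \<le> real CARD('s \<times> 'a) * wmax w" .
  have "S / wmin w \<le> real CARD('s \<times> 'a) * wmax w / wmin w * S"
  proof -
    have "S * 1 \<le> S * (real CARD('s \<times> 'a) * wmax w)" using nw S0 by (rule mult_left_mono)
    then have "S / wmin w \<le> S * (real CARD('s \<times> 'a) * wmax w) / wmin w"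
      using wmin_pos by (simp add: divide_right_mono)
    then show ?thesis by (simp add: field_simps)
  qed
  then have "(S / wmin w) powr (1/p) \<le> (real CARD('s \<times> 'a) * wmax w / wmin w * S) powr (1/p)"
    using p S0 wmin_pos by (intro powr_mono2) auto
  also have "\<dots> = real CARD('s \<times> 'a) powr (1 / p) * (wmax w / wmin w) powr (1 / p) * S powr (1/p)"
    using S0 wmin_pos wmax_ge[of j] w_pos[of j]
    by (simp add: powr_mult[symmetric] powr_divide)
  finally have "M \<le> real CARD('s \<times> 'a) powr (1 / p) * (wmax w / wmin w) powr (1 / p) * S powr (1/p)"
    using Mle by linarith
  then have "\<gamma> * M \<le> \<gamma> * (real CARD('s \<times> 'a) powr (1 / p) * (wmax w / wmin w) powr (1 / p) * S powr (1/p))"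
    using gamma by (simp add: mult_left_mono)
  then show ?thesis using step1 unfolding wnorm_def S_def by (simp add: mult.assoc)
qed

end
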